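(* Every $f=\sum\hat f_{\alpha,\beta;\omega}E_{\alpha,\beta}\star e_\omega\in\mathscr{F}_n(\mathbb{C}^d)$ defines, via formal evaluation $X\mapsto\mathrm{ev}_X(f)=\sum\hat f_{\alpha,\beta;\omega}\,E_{\alpha,\beta}\star e_\omega(X)$, a graded and direct sum-preserving function on $\bigsqcup_{m\ge1}\{X\in\mathbb{C}^{(mn\times mn)\cdot d}:\|X\|_{\mathrm{col}}<\frac1{\sqrt n}\}$.
   Context: Equip $\mathbb{C}^{n\times n}$ with the Hilbert–Schmidt inner product and let $\mathscr{F}_n(\mathbb{C}^d)=\bigoplus_{\ell\ge0}\mathbb{C}^{n\times n}\otimes(\mathbb{C}^d\otimes\mathbb{C}^{n\times n})^{\otimes\ell}$. With $E_{i,j}$ the matrix units of $\mathbb{C}^{n\times n}$ and $e_k$ the standard basis of $\mathbb{C}^d$, for words $\alpha=a_0\cdots a_\ell,\beta=b_0\cdots b_\ell$ in $\{1,\dots,n\}$ and $\omega=w_1\cdots w_\ell$ in $\{1,\dots,d\}$, $E_{\alpha,\beta}\star e_\omega=E_{a_0,b_0}\otimes e_{w_1}\otimes E_{a_1,b_1}\otimes\cdots\otimes e_{w_\ell}\otimes E_{a_\ell,b_\ell}$; these form an orthonormal basis, and $\hat f_{\alpha,\beta;\omega}$ are the coefficients of $f$ in it. For $X\in\mathbb{C}^{(mn\times mn)\cdot d}$ (column $d$-tuples of $mn\times mn$ matrices, $\|X\|_{\mathrm{col}}$ the operator norm of the stacked matrix), $E_{\alpha,\beta}\star e_\omega(X)=(I_m\otimes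 E_{a_0,b_0})X_{w_1}(I_m\otimes E_{a_1,b_1})\cdots X_{w_\ell}(I_m\otimes E_{a_\ell,b_\ell})$. Graded means $\mathrm{ev}_X(f)\in\mathbb{C}^{mn\times mn}$ for $X$ at level $mn$; direct sum-preserving means $\mathrm{ev}_{X\oplus X'}(f)=\mathrm{ev}_X(f)\oplus\mathrm{ev}_{X'}(f)$. *)

theory Defs
  imports "Jordan_Normal_Form.Matrix" "HOL-Analysis.Infinite_Sum"
begin

(* Indices are 0-based: matrix indices range over {..<n}, letters of omega over {..<d}. *)

(* Index set of the orthonormal basis E_{alpha,beta} * e_omega of F_n(C^d). *)
definition fock_index :: "nat \<Rightarrow> nat \<Rightarrow> (nat list \<times> nat list \<times> nat list) set" where
  "fock_index n d = {(a, b, w). length a = Suc (length w) \<and> length b = Suc (length w)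
     \<and> set a \<subseteq> {..<n} \<and> set b \<subseteq> {..<n} \<and> set w \<subseteq> {..<d}}"

definition level_index :: "nat \<Rightarrow> nat \<Rightarrow> nat \<Rightarrow> (nat list \<times> nat list \<times> nat list) set" where
  "level_index n d l = {(a, b, w) \<in> fock_index n d. length w = l}"

(* fhat are the coefficients of an element f of F_n(C^d): square summable over the basis *)
definition in_fock :: "nat \<Rightarrow> nat \<Rightarrow> (nat list \<Rightarrow> nat list \<Rightarrow> nat list \<Rightarrow> complex) \<Rightarrow> bool" where
  "in_fock n d fhat \<longleftrightarrow>
     (\<lambda>(a, b, w). (cmod (fhat a b w))\<^sup>2) summable_on fock_index n d"

(* I_m \<otimes> E_{a,b} as an (m n) x (m n) matrix; row index p*n + r *)
definition blockE :: "nat \<Rightarrow> nat \<Rightarrow> nat \<Rightarrow> nat \<Rightarrow> complex mat" where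
  "blockE m n a b = mat (m * n) (m * n)
     (\<lambda>(i, j). if i div n = j div n \<and> i mod n = a \<and> j mod n = b then 1 else 0)"

fun word_eval :: "nat \<Rightarrow> nat \<Rightarrow> nat list \<Rightarrow> nat list \<Rightarrow> nat list \<Rightarrow> complex mat list \<Rightarrow> complex mat" where
  "word_eval m n [a] [b] [] X = blockE m n a b"
| "word_eval m n (a # as) (b # bs) (w # ws) X = blockE m n a b * (X ! w) * word_eval m n as bs ws X"
| "word_eval m n _ _ _ X = 0\<^sub>m (m * n) (m * n)"

definition hom_part :: "nat \<Rightarrow> nat \<Rightarrow> nat \<Rightarrow> (nat list \<Rightarrow> nat list \<Rightarrow> nat list \<Rightarrow> complex)
     \<Rightarrow> complex mat list \<Rightarrow> nat \<Rightarrow> nat \<Rightarrow> nat \<Rightarrow> complex" where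
  "hom_part m n d fhat X l i j =
     (\<Sum>(a, b, w)\<in>level_index n d l. fhat a b w * (word_eval m n a b w X $$ (i, j)))"

definition ev :: "nat \<Rightarrow> nat \<Rightarrow> nat \<Rightarrow> (nat list \<Rightarrow> nat list \<Rightarrow> nat list \<Rightarrow> complex)
     \<Rightarrow> complex mat list \<Rightarrow> complex mat" where
  "ev m n d fhat X = mat (m * n) (m * n) (\<lambda>(i, j). \<Sum>l. hom_part m n d fhat X l i j)"

(* column operator norm of a d-tuple of N x N matrices (norm of the stacked dN x N matrix) *)
definition col_norm :: "nat \<Rightarrow> complex mat list \<Rightarrow> real" where
  "col_norm N X = Sup {sqrt (\<Sum>k<length X. \<Sum>i<N. (cmod ((X ! k *\<^sub>v v) $ i))\<^sup>2) | v.
      v \<in> carrier_vec N \<and> (\<Sum>i<N. (cmod (v $ i))\<^sup>2) \<le> 1}"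

definition dom_level :: "nat \<Rightarrow> nat \<Rightarrow> nat \<Rightarrow> complex mat list set" where
  "dom_level m n d = {X. length X = d \<and> (\<forall>k<d. X ! k \<in> carrier_mat (m * n) (m * n))
      \<and> col_norm (m * n) X < 1 / sqrt (real n)}"

definition tuple_dsum :: "nat \<Rightarrow> nat \<Rightarrow> complex mat list \<Rightarrow> complex mat list \<Rightarrow> complex mat list" where
  "tuple_dsum N N' X X' = map (\<lambda>k. four_block_mat (X ! k) (0\<^sub>m N N') (0\<^sub>m N' N) (X' ! k)) [0..<length X]"

end

theory Submission imports Defs "HOL-Analysis.L2_Norm" begin

lemma sum_shift_aux: "sum g {a..<a+(k::nat)} = (\<Sum>r<k. g (a+r))"
  by (induct k) (auto simp: lessThan_Suc add.commute)

lemma sum_mn: "(\<Sum>i<(m::nat)*n. g i) = (\<Sum>p<m. \<Sum>r<n. g (p*n + r)) "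
proof -
  have "(\<Sum>i<m*n. g i) = (\<Sum>p<m. sum g {p*n..<p*n+n})"
    using sum.nat_group[of g n m] by simp
  also have "\<dots> = (\<Sum>p<m. \<Sum>r<n. g (p*n + r))"
  proof (rule sum.cong[OF refl])
    fix p
    show "sum g {p*n..<p*n+n} = (\<Sum>r<n. g (p*n + r))"
      by (rule sum_shift_aux)
  qed
  finally show ?thesis .
qed

definition ns :: "nat \<Rightarrow> complex vec \<Rightarrow> real" where
  "ns N y = (\<Sum>i<N. (cmod (y $ i))\<^sup>2)"

lemma blockE_carrier[simp]: "blockE m n a b \<in> carrier_mat (m*n) (m*n)"
  unfolding blockE_def by auto

lemma blockE_mult_vec:
  assumes y: "y \<in> carrier_vec (m*n)" and i: "i < m*n" and b: "b < n"
  shows "(blockE m n a b *\<^sub>v y) $ i = (if i mod n = a then y $ (i div n * n + b) else 0)"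
proof -
  have n: "n > 0" using b by auto
  have "(blockE m n a b *\<^sub>v y) $ i = (\<Sum>j<m*n. (if i div n = j div n \<and> i mod n = a \<and> j mod n = b then 1 else 0) * y $ j)"
    using y i unfolding blockE_def by (simp add: scalar_prod_def row_def atLeast0LessThan)
  also have "\<dots> = (\<Sum>j<m*n. if j = i div n * n + b then (if i mod n = a then y $ j else 0) else 0)"
  proof (rule sum.cong[OF refl])
    fix j assume "j \<in> {..<m*n}"
    have "(i div n = j div n \<and> j mod n = b) \<longleftrightarrow> j = i div n * n + b"
      using b n by (metis div_mult_mod_eq mod_less mod_mult_self2 div_mult_self1 div_less add.commute add_0 less_numeral_extra(3) mult.commute)
    then show "(if i div n = j div n \<and> i mod n = a \<and> j mod n = b then 1 else 0) * y $ j = (if j = i div n * n + b then (if i mod n = a then y $ j else 0) else 0)"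
      by auto
  qed
  also have "\<dots> = (if i mod n = a then y $ (i div n * n + b) else 0)"
  proof -
    have "i div n * n + b < m * n"
    proof -
      have "i div n < m" using i by (simp add: less_mult_imp_div_less)
      then have "i div n + 1 \<le> m" by simp
      then have "(i div n + 1) * n \<le> m * n" by (rule mult_right_mono) simp
      then show ?thesis using b by (simp add: algebra_simps)
    qed
    then show ?thesis by (simp add: sum.delta)
  qed
  finally show ?thesis .
qed

lemma ns_blockE:
  assumes y: "y \<in> carrier_vec (m*n)" and a: "a < n"
  shows "(\<Sum>b<n. ns (m*n) (blockE m n a b *\<^sub>v y)) = ns (m*n) y"
proof -
  have n: "n > 0" using a by auto
  have "(\<Sum>b<n. ns (m*n) (blockE m n a b *\<^sub>v y)) = (\<Sum>b<n. \<Sum>p<m. (cmod (y $ (p*n+b)))\<^sup>2)"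
  proof (rule sum.cong[OF refl])
    fix b assume b: "b \<in> {..<n}"
    have "ns (m*n) (blockE m n a b *\<^sub>v y) = (\<Sum>i<m*n. (if i mod n = a then (cmod (y $ (i div n * n + b)))\<^sup>2 else 0))"
      unfolding ns_def by (rule sum.cong[OF refl], use blockE_mult_vec[OF y _ ] b in auto)
    also have "\<dots> = (\<Sum>p<m. \<Sum>r<n. (if (p*n+r) mod n = a then (cmod (y $ ((p*n+r) div n * n + b)))\<^sup>2 else 0))"
      by (rule sum_mn)
    also have "\<dots> = (\<Sum>p<m. \<Sum>r<n. (if r = a then (cmod (y $ (p*n + b)))\<^sup>2 else 0))"
      by (rule sum.cong[OF refl], rule sum.cong[OF refl], auto)
    also have "\<dots> = (\<Sum>p<m. (cmod (y $ (p*n+b)))\<^sup>2)"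
      using a by (simp add: sum.delta)
    finally show "ns (m*n) (blockE m n a b *\<^sub>v y) = (\<Sum>p<m. (cmod (y $ (p*n+b)))\<^sup>2)" .
  qed
  also have "\<dots> = (\<Sum>p<m. \<Sum>b<n. (cmod (y $ (p*n+b)))\<^sup>2)" by (rule sum.swap)
  also have "\<dots> = ns (m*n) y" unfolding ns_def by (rule sum_mn[symmetric])
  finally show ?thesis .
qed

definition cset :: "nat \<Rightarrow> complex mat list \<Rightarrow> real set" where
  "cset N X = {sqrt (\<Sum>k<length X. \<Sum>i<N. (cmod ((X ! k *\<^sub>v v) $ i))\<^sup>2) | v.
      v \<in> carrier_vec N \<and> (\<Sum>i<N. (cmod (v $ i))\<^sup>2) \<le> 1}"

lemma col_norm_cset: "col_norm N X = Sup (cset N X)"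
  unfolding col_norm_def cset_def by simp

lemma entry_le_ns: assumes "i < N" shows "(cmod (v $ i))\<^sup>2 \<le> ns N v"
  unfolding ns_def using assms by (intro member_le_sum) auto

lemma mult_vec_bound:
  assumes A: "A \<in> carrier_mat N N" and v: "v \<in> carrier_vec N" and nv: "ns N v \<le> 1" and i: "i < N"
  shows "cmod ((A *\<^sub>v v) $ i) \<le> (\<Sum>j<N. cmod (A $$ (i,j)))"
proof -
  have "(A *\<^sub>v v) $ i = (\<Sum>j<N. A $$ (i,j) * v $ j)"
    using A v i by (simp add: scalar_prod_def row_def atLeast0LessThan)
  also have "cmod \<dots> \<le> (\<Sum>j<N. cmod (A $$ (i,j) * v $ j))" by (rule norm_sum)
  also have "\<dots> \<le> (\<Sum>j<N. cmod (A $$ (i,j)))"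
  proof (rule sum_mono)
    fix j assume j: "j \<in> {..<N}"
    have "(cmod (v $ j))\<^sup>2 \<le> 1" using entry_le_ns[of j N v] j nv by auto
    then have "cmod (v $ j) \<le> 1" by (simp add: power_le_one_iff)
    then show "cmod (A $$ (i,j) * v $ j) \<le> cmod (A $$ (i,j))"
      by (simp add: norm_mult mult_left_le)
  qed
  finally show ?thesis .
qed

lemma cset_bdd:
  assumes X: "\<forall>k<length X. X ! k \<in> carrier_mat N N"
  shows "bdd_above (cset N X)"
proof -
  let ?B = "sqrt (\<Sum>k<length X. \<Sum>i<N. (\<Sum>j<N. cmod ((X!k) $$ (i,j)))\<^sup>2)"
  show ?thesis unfolding bdd_above_def
  proof (intro exI ballI)
    fix x assume "x \<in> cset N X"
    then obtain v where x: "x = sqrt (\<Sum>k<length X. \<Sum>i<N. (cmod ((X ! k *\<^sub>v v) $ i))\<^sup>2)"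
      and v: "v \<in> carrier_vec N" and nv: "ns N v \<le> 1" unfolding cset_def ns_def by auto
    show "x \<le> ?B" unfolding x
      apply (rule real_sqrt_le_mono, rule sum_mono, rule sum_mono)
      apply (rule power_mono)
      using mult_vec_bound[OF _ v nv] X by auto
  qed
qed

lemma mult_zero_vec_cmod: assumes "A \<in> carrier_mat N N" "i < N"
  shows "cmod ((A *\<^sub>v 0\<^sub>v N) $ i) = 0"
  using assms by simp

lemma sum_zero_X: assumes X: "\<forall>k<length X. X ! k \<in> carrier_mat N N"
  shows "(\<Sum>k<length X. \<Sum>i<N. (cmod ((X ! k *\<^sub>v 0\<^sub>v N) $ i))\<^sup>2) = 0"
  by (rule sum.neutral, rule ballI, rule sum.neutral) (use X mult_zero_vec_cmod in auto)

lemma cset_zero: assumes X: "\<forall>k<length X. X ! k \<in> carrier_mat N N" shows "0 \<in> cset N X"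
proof -
  have "0 = sqrt (\<Sum>k<length X. \<Sum>i<N. (cmod ((X ! k *\<^sub>v 0\<^sub>v N) $ i))\<^sup>2)"
    using sum_zero_X[OF X] by simp
  moreover have "0\<^sub>v N \<in> carrier_vec N \<and> (\<Sum>i<N. (cmod ((0\<^sub>v N :: complex vec) $ i))\<^sup>2) \<le> 1" by simp
  ultimately show ?thesis unfolding cset_def by blast
qed

lemma col_norm_nonneg:
  assumes X: "\<forall>k<length X. X ! k \<in> carrier_mat N N"
  shows "col_norm N X \<ge> 0"
  unfolding col_norm_cset by (rule cSup_upper2[OF cset_zero[OF X] _ cset_bdd[OF X]]) simp

lemma ns_nonneg: "ns N v \<ge> 0" unfolding ns_def by (auto intro: sum_nonneg)

lemma ns_smult: "ns N (r \<cdot>\<^sub>v v) = (cmod r)\<^sup>2 * ns N v" if "v \<in> carrier_vec N"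
  using that unfolding ns_def by (auto simp: sum_distrib_left norm_mult power_mult_distrib)

lemma ns_zero: assumes v: "v \<in> carrier_vec N" and z: "ns N v = 0" shows "v = 0\<^sub>v N"
proof (rule eq_vecI)
  fix i assume "i < dim_vec (0\<^sub>v N :: complex vec)"
  then have i: "i < N" by simp
  have "(cmod (v $ i))\<^sup>2 \<le> 0" using entry_le_ns[OF i, of v] z by simp
  then show "v $ i = 0\<^sub>v N $ i" using i by simp
qed (use v in auto)

lemma col_norm_bound:
  assumes X: "\<forall>k<length X. X ! k \<in> carrier_mat N N" and y: "y \<in> carrier_vec N"
  shows "(\<Sum>k<length X. ns N (X!k *\<^sub>v y)) \<le> (col_norm N X)\<^sup>2 * ns N y"
proof (cases "ns N y = 0")
  case True
  then have "y = 0\<^sub>v N" using ns_zero y by blast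
  then show ?thesis using sum_zero_X[OF X] by (simp add: ns_def)
next
  case False
  define r where "r = sqrt (ns N y)"
  have r: "r > 0" using False ns_nonneg[of N y] unfolding r_def by auto
  define v where "v = complex_of_real (1/r) \<cdot>\<^sub>v y"
  have v: "v \<in> carrier_vec N" unfolding v_def using y by simp
  have c: "cmod (complex_of_real (1/r)) = 1/r" using r by (simp only: norm_of_real) simp
  have r2: "r^2 = ns N y" unfolding r_def using ns_nonneg by simp
  have nv: "ns N v = 1" unfolding v_def ns_smult[OF y] c using r2 r False by (simp add: power_divide)
  have Xv: "ns N (X!k *\<^sub>v v) = (1/r)\<^sup>2 * ns N (X!k *\<^sub>v y)" if k: "k < length X" for k
  proof -
    have "X!k *\<^sub>v v = complex_of_real (1/r) \<cdot>\<^sub>v (X!k *\<^sub>v y)"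
      unfolding v_def using mult_mat_vec[OF _ y] X k by blast
    moreover have "X!k *\<^sub>v y \<in> carrier_vec N" using X k y by auto
    ultimately show ?thesis by (simp only: ns_smult c)
  qed
  have "sqrt (\<Sum>k<length X. ns N (X!k *\<^sub>v v)) \<in> cset N X"
    unfolding cset_def ns_def using v nv[unfolded ns_def] by auto
  then have "sqrt (\<Sum>k<length X. ns N (X!k *\<^sub>v v)) \<le> col_norm N X"
    unfolding col_norm_cset using cset_bdd[OF X] by (rule cSup_upper)
  moreover have s0: "0 \<le> (\<Sum>k<length X. ns N (X!k *\<^sub>v v))" by (intro sum_nonneg ns_nonneg)
  ultimately have "(sqrt (\<Sum>k<length X. ns N (X!k *\<^sub>v v)))\<^sup>2 \<le> (col_norm N X)\<^sup>2"
    by (intro power_mono) auto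
  then have "(\<Sum>k<length X. ns N (X!k *\<^sub>v v)) \<le> (col_norm N X)\<^sup>2"
    using s0 by simp
  then have "(1/r)\<^sup>2 * (\<Sum>k<length X. ns N (X!k *\<^sub>v y)) \<le> (col_norm N X)\<^sup>2"
    using Xv by (simp add: sum_distrib_left)
  then have "(\<Sum>k<length X. ns N (X!k *\<^sub>v y)) \<le> (col_norm N X)\<^sup>2 * r\<^sup>2"
    using r by (simp add: field_simps power_divide)
  then show ?thesis unfolding r_def using ns_nonneg by simp
qed

lemma level0: "level_index n d 0 = (\<lambda>(a,b). ([a],[b],[])) ` ({..<n} \<times> {..<n})"
proof (rule Set.set_eqI)
  fix t :: "nat list \<times> nat list \<times> nat list"
  obtain a b w where t: "t = (a,b,w)" by (cases t) auto
  show "t \<in> level_index n d 0 \<longleftrightarrow> t \<in> (\<lambda>(a,b). ([a],[b],[])) ` ({..<n} \<times> {..<n})"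
    unfolding t level_index_def fock_index_def
    by (auto simp: length_Suc_conv image_iff)
qed

lemma levelSuc: "level_index n d (Suc l) =
  (\<lambda>((as,bs,ws),w,a,b). (a#as,b#bs,w#ws)) ` (level_index n d l \<times> {..<d} \<times> {..<n} \<times> {..<n})"
proof (rule Set.set_eqI)
  fix t :: "nat list \<times> nat list \<times> nat list"
  obtain a b w where t: "t = (a,b,w)" by (cases t) auto
  show "t \<in> level_index n d (Suc l) \<longleftrightarrow> t \<in> (\<lambda>((as,bs,ws),w,a,b). (a#as,b#bs,w#ws)) ` (level_index n d l \<times> {..<d} \<times> {..<n} \<times> {..<n})"
  proof
    assume "t \<in> level_index n d (Suc l)"
    then have h: "length a = Suc (Suc l)" "length b = Suc (Suc l)" "length w = Suc l"
      "set a \<subseteq> {..<n}" "set b \<subseteq> {..<n}" "set w \<subseteq> {..<d}"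
      unfolding t level_index_def fock_index_def by auto
    then obtain a0 as b0 bs w0 ws where "a = a0#as" "b = b0#bs" "w = w0#ws"
      by (metis length_Suc_conv)
    then show "t \<in> (\<lambda>((as,bs,ws),w,a,b). (a#as,b#bs,w#ws)) ` (level_index n d l \<times> {..<d} \<times> {..<n} \<times> {..<n})"
      using h unfolding t level_index_def fock_index_def image_iff
      by (intro bexI[of _ "((as,bs,ws),w0,a0,b0)"]) auto
  next
    assume "t \<in> (\<lambda>((as,bs,ws),w,a,b). (a#as,b#bs,w#ws)) ` (level_index n d l \<times> {..<d} \<times> {..<n} \<times> {..<n})"
    then show "t \<in> level_index n d (Suc l)"
      unfolding t level_index_def fock_index_def by auto
  qed
qed

lemma finite_level: "finite (level_index n d l)"
  by (induct l) (auto simp: level0 levelSuc)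

lemma sum_levelSuc: "(\<Sum>t\<in>level_index n d (Suc l). g t) =
  (\<Sum>(as,bs,ws)\<in>level_index n d l. \<Sum>w<d. \<Sum>a<n. \<Sum>b<n. g (a#as,b#bs,w#ws))"
proof -
  have inj: "inj_on (\<lambda>((as,bs,ws),w,a,b). (a#as,b#bs,w#ws)) (level_index n d l \<times> {..<d} \<times> {..<n} \<times> {..<n})"
    by (auto simp: inj_on_def)
  have "(\<Sum>t\<in>level_index n d (Suc l). g t) =
     (\<Sum>x\<in>level_index n d l \<times> {..<d} \<times> {..<n} \<times> {..<n}. g ((\<lambda>((as,bs,ws),w,a,b). (a#as,b#bs,w#ws)) x))"
    unfolding levelSuc by (rule sum.reindex[OF inj, unfolded comp_def])
  also have "\<dots> = (\<Sum>(as,bs,ws)\<in>level_index n d l. \<Sum>w<d. \<Sum>a<n. \<Sum>b<n. g (a#as,b#bs,w#ws))"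
    unfolding sum.cartesian_product' by (simp add: split_def)
  finally show ?thesis .
qed

lemma sum_level0: "(\<Sum>t\<in>level_index n d 0. g t) = (\<Sum>a<n. \<Sum>b<n. g ([a],[b],[]))"
proof -
  have inj: "inj_on (\<lambda>(a,b). ([a],[b],[]::nat list)) ({..<n} \<times> {..<n})" by (auto simp: inj_on_def)
  show ?thesis unfolding level0 sum.reindex[OF inj]
    unfolding sum.cartesian_product' by (simp add: split_def)
qed

lemma word_eval_carrier:
  assumes X: "\<forall>k<d. X ! k \<in> carrier_mat (m*n) (m*n)"
  shows "set w \<subseteq> {..<d} \<Longrightarrow> word_eval m n a b w X \<in> carrier_mat (m*n) (m*n)"
proof (induction w arbitrary: a b)
  case Nil
  then show ?case
    by (cases a; cases b) (auto, (case_tac list; case_tac lista; simp)+)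
next
  case (Cons w ws)
  then have w: "w < d" "set ws \<subseteq> {..<d}" by auto
  then have Xw: "X ! w \<in> carrier_mat (m*n) (m*n)" using X by auto
  show ?case using Cons.IH[OF w(2)] Xw
    by (cases a; cases b) (auto intro!: mult_carrier_mat[of _ "m*n" "m*n" _ "m*n"])
qed

lemma ns_unit: "j < N \<Longrightarrow> ns N (unit_vec N j) = 1"
  unfolding ns_def by (simp add: if_distrib[of "\<lambda>x. (cmod x)\<^sup>2"] cong: if_cong)

lemma col_blockE: "j < m*n \<Longrightarrow> col (blockE m n a b) j = blockE m n a b *\<^sub>v unit_vec (m*n) j"
proof -
  assume j: "j < m*n"
  have "col (blockE m n a b) j = col (blockE m n a b * 1\<^sub>m (m*n)) j"
    by (simp add: right_mult_one_mat[OF blockE_carrier])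
  also have "\<dots> = blockE m n a b *\<^sub>v unit_vec (m*n) j"
    using j by (subst col_mult2[OF blockE_carrier]) auto
  finally show ?thesis .
qed

lemma F_bound:
  assumes Xl: "length X = d" and X: "\<forall>k<d. X!k \<in> carrier_mat (m*n) (m*n)" and j: "j < m*n"
  shows "(\<Sum>(a,b,w)\<in>level_index n d l. ns (m*n) (col (word_eval m n a b w X) j))
     \<le> n * (n * (col_norm (m*n) X)\<^sup>2)^l"
proof (induction l)
  case 0
  have "(\<Sum>(a,b,w)\<in>level_index n d 0. ns (m*n) (col (word_eval m n a b w X) j))
      = (\<Sum>a<n. \<Sum>b<n. ns (m*n) (blockE m n a b *\<^sub>v unit_vec (m*n) j))"
    unfolding sum_level0 using j by (simp add: col_blockE)
  also have "\<dots> = (\<Sum>a<n. ns (m*n) (unit_vec (m*n) j))"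
    by (rule sum.cong[OF refl], rule ns_blockE) auto
  also have "\<dots> = n" using ns_unit[OF j] by simp
  finally show ?case by simp
next
  case (Suc l)
  let ?N = "m*n"
  let ?c = "col_norm ?N X"
  let ?W = "\<lambda>as bs ws. word_eval m n as bs ws X"
  have "(\<Sum>(a,b,w)\<in>level_index n d (Suc l). ns ?N (col (?W a b w) j))
     = (\<Sum>(as,bs,ws)\<in>level_index n d l. \<Sum>w<d. \<Sum>a<n. \<Sum>b<n.
           ns ?N (col (?W (a#as) (b#bs) (w#ws)) j))"
    by (subst sum_levelSuc) (simp add: split_def)
  also have "\<dots> = (\<Sum>(as,bs,ws)\<in>level_index n d l. \<Sum>w<d. n * ns ?N (X!w *\<^sub>v col (?W as bs ws) j))"
  proof (rule sum.cong[OF refl], clarify, rule sum.cong[OF refl])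
    fix as bs ws w assume t: "(as,bs,ws) \<in> level_index n d l" and w: "w \<in> {..<d}"
    have ws: "set ws \<subseteq> {..<d}" using t unfolding level_index_def fock_index_def by auto
    have Wc: "?W as bs ws \<in> carrier_mat ?N ?N" using word_eval_carrier[OF X ws] .
    have Xw: "X!w \<in> carrier_mat ?N ?N" using X w by auto
    have cv: "col (?W as bs ws) j \<in> carrier_vec ?N" using Wc j by auto
    have "\<And>a b. col (?W (a#as) (b#bs) (w#ws)) j = blockE m n a b *\<^sub>v (X!w *\<^sub>v col (?W as bs ws) j)"
    proof -
      fix a b
      have "col (?W (a#as) (b#bs) (w#ws)) j = col (blockE m n a b * X!w * ?W as bs ws) j" by simp
      also have "\<dots> = (blockE m n a b * X!w) *\<^sub>v col (?W as bs ws) j"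
        using Wc Xw j by (intro col_mult2) auto
      also have "\<dots> = blockE m n a b *\<^sub>v (X!w *\<^sub>v col (?W as bs ws) j)"
        by (rule assoc_mult_mat_vec[OF blockE_carrier Xw cv])
      finally show "col (?W (a#as) (b#bs) (w#ws)) j = blockE m n a b *\<^sub>v (X!w *\<^sub>v col (?W as bs ws) j)" .
    qed
    then have "(\<Sum>a<n. \<Sum>b<n. ns ?N (col (?W (a#as) (b#bs) (w#ws)) j))
        = (\<Sum>a<n. \<Sum>b<n. ns ?N (blockE m n a b *\<^sub>v (X!w *\<^sub>v col (?W as bs ws) j)))" by simp
    also have "\<dots> = (\<Sum>a<n. ns ?N (X!w *\<^sub>v col (?W as bs ws) j))"
      using Xw cv by (intro sum.cong[OF refl] ns_blockE) auto
    also have "\<dots> = n * ns ?N (X!w *\<^sub>v col (?W as bs ws) j)" by simp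
    finally show "(\<Sum>a<n. \<Sum>b<n. ns ?N (col (?W (a#as) (b#bs) (w#ws)) j))
        = n * ns ?N (X!w *\<^sub>v col (?W as bs ws) j)" .
  qed
  also have "\<dots> \<le> (\<Sum>(as,bs,ws)\<in>level_index n d l. n * (?c\<^sup>2 * ns ?N (col (?W as bs ws) j)))"
  proof (rule sum_mono, clarify)
    fix as bs ws assume t: "(as,bs,ws) \<in> level_index n d l"
    have ws: "set ws \<subseteq> {..<d}" using t unfolding level_index_def fock_index_def by auto
    have cv: "col (?W as bs ws) j \<in> carrier_vec ?N" using word_eval_carrier[OF X ws] j by auto
    have "(\<Sum>w<d. ns ?N (X!w *\<^sub>v col (?W as bs ws) j)) \<le> ?c\<^sup>2 * ns ?N (col (?W as bs ws) j)"
      using col_norm_bound[of X ?N, OF _ cv] X Xl by auto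
    then show "(\<Sum>w<d. n * ns ?N (X!w *\<^sub>v col (?W as bs ws) j)) \<le> n * (?c\<^sup>2 * ns ?N (col (?W as bs ws) j))"
      by (simp add: sum_distrib_left[symmetric] mult_left_mono)
  qed
  also have "\<dots> = n * ?c\<^sup>2 * (\<Sum>(as,bs,ws)\<in>level_index n d l. ns ?N (col (?W as bs ws) j))"
    by (simp add: sum_distrib_left split_def mult.assoc)
  also have "\<dots> \<le> n * ?c\<^sup>2 * (n * (n * ?c\<^sup>2)^l)"
    using Suc.IH by (intro mult_left_mono) auto
  also have "\<dots> = n * (n * ?c\<^sup>2)^Suc l" by (simp add: algebra_simps)
  finally show ?case .
qed

lemma hom_bound:
  assumes f: "in_fock n d fhat" and Xl: "length X = d" and X: "\<forall>k<d. X!k \<in> carrier_mat (m*n) (m*n)"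
    and i: "i < m*n" and j: "j < m*n"
  shows "cmod (hom_part m n d fhat X l i j) \<le>
     sqrt (infsum (\<lambda>(a, b, w). (cmod (fhat a b w))\<^sup>2) (fock_index n d)) * sqrt (n * (n * (col_norm (m*n) X)\<^sup>2)^l)"
proof -
  let ?L = "level_index n d l"
  define F where "F = (\<lambda>(a::nat list,b::nat list,w::nat list). fhat a b w)"
  define G where "G = (\<lambda>(a,b,w). word_eval m n a b w X $$ (i,j))"
  have hp: "hom_part m n d fhat X l i j = (\<Sum>t\<in>?L. F t * G t)"
    unfolding hom_part_def F_def G_def by (simp add: split_def)
  have "cmod (hom_part m n d fhat X l i j) \<le> (\<Sum>t\<in>?L. cmod (F t * G t))"
    unfolding hp by (rule norm_sum)
  also have "\<dots> = (\<Sum>t\<in>?L. \<bar>cmod (F t)\<bar> * \<bar>cmod (G t)\<bar>)" by (simp add: norm_mult)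
  also have "\<dots> \<le> L2_set (\<lambda>t. cmod (F t)) ?L * L2_set (\<lambda>t. cmod (G t)) ?L"
    by (rule L2_set_mult_ineq)
  also have "\<dots> \<le> sqrt (infsum (\<lambda>(a, b, w). (cmod (fhat a b w))\<^sup>2) (fock_index n d)) * sqrt (n * (n * (col_norm (m*n) X)\<^sup>2)^l)"
  proof (rule mult_mono)
    have "(\<Sum>t\<in>?L. (cmod (F t))\<^sup>2) \<le> infsum (\<lambda>(a, b, w). (cmod (fhat a b w))\<^sup>2) (fock_index n d)"
    proof -
      have "(\<Sum>t\<in>?L. (cmod (F t))\<^sup>2) = (\<Sum>t\<in>?L. (\<lambda>(a, b, w). (cmod (fhat a b w))\<^sup>2) t)"
        unfolding F_def by (simp add: split_def)
      also have "\<dots> \<le> infsum (\<lambda>(a, b, w). (cmod (fhat a b w))\<^sup>2) (fock_index n d)"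
        using f unfolding in_fock_def
        by (rule finite_sum_le_infsum) (use finite_level in \<open>auto simp: level_index_def\<close>)
      finally show ?thesis .
    qed
    then show "L2_set (\<lambda>t. cmod (F t)) ?L \<le> sqrt (infsum (\<lambda>(a, b, w). (cmod (fhat a b w))\<^sup>2) (fock_index n d))"
      unfolding L2_set_def by simp
    have "(\<Sum>t\<in>?L. (cmod (G t))\<^sup>2) \<le> (\<Sum>(a,b,w)\<in>?L. ns (m*n) (col (word_eval m n a b w X) j))"
    proof (rule sum_mono, clarify)
      fix a b w assume t: "(a,b,w) \<in> ?L"
      have ws: "set w \<subseteq> {..<d}" using t unfolding level_index_def fock_index_def by auto
      have Wc: "word_eval m n a b w X \<in> carrier_mat (m*n) (m*n)" using word_eval_carrier[OF X ws] .
      have "G (a,b,w) = col (word_eval m n a b w X) j $ i" unfolding G_def using Wc i j by auto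
      then show "(cmod (G (a,b,w)))\<^sup>2 \<le> ns (m*n) (col (word_eval m n a b w X) j)"
        using entry_le_ns[OF i] by simp
    qed
    also have "\<dots> \<le> n * (n * (col_norm (m*n) X)\<^sup>2)^l" by (rule F_bound[OF Xl X j])
    finally show "L2_set (\<lambda>t. cmod (G t)) ?L \<le> sqrt (n * (n * (col_norm (m*n) X)\<^sup>2)^l)"
      unfolding L2_set_def by simp
  qed (auto simp: L2_set_def intro!: infsum_nonneg sum_nonneg)
  finally show ?thesis .
qed

lemma hom_summable:
  assumes f: "in_fock n d fhat" and Xl: "length X = d" and X: "\<forall>k<d. X!k \<in> carrier_mat (m*n) (m*n)"
    and i: "i < m*n" and j: "j < m*n" and c: "col_norm (m*n) X < 1 / sqrt (real n)"
  shows "summable (\<lambda>l. hom_part m n d fhat X l i j)"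
proof -
  let ?S = "infsum (\<lambda>(a, b, w). (cmod (fhat a b w))\<^sup>2) (fock_index n d)"
  let ?c = "col_norm (m*n) X"
  let ?q = "n * ?c\<^sup>2"
  have Xc: "\<forall>k<length X. X ! k \<in> carrier_mat (m*n) (m*n)" using X Xl by simp
  have c0: "?c \<ge> 0" by (rule col_norm_nonneg[OF Xc])
  have n0: "n > 0" using i by (cases n) auto
  have "?c\<^sup>2 < (1 / sqrt (real n))\<^sup>2" using c c0 by (intro power_strict_mono) auto
  then have "?c\<^sup>2 < 1 / n" using n0 by (simp add: power_divide)
  then have q1: "?q < 1" using n0 by (simp add: field_simps)
  have q0: "?q \<ge> 0" by simp
  have sq: "sqrt ?q < 1" using q1 q0 by simp
  have g: "summable (\<lambda>l. sqrt ?S * sqrt n * sqrt ?q ^ l)"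
    by (intro summable_mult summable_geometric) (use sq in auto)
  show ?thesis
  proof (rule summable_comparison_test[OF _ g], intro exI allI impI)
    fix l :: nat
    have "cmod (hom_part m n d fhat X l i j) \<le> sqrt ?S * sqrt (n * ?q^l)"
      by (rule hom_bound[OF f Xl X i j])
    also have "\<dots> = sqrt ?S * sqrt n * sqrt ?q ^ l"
      by (simp add: real_sqrt_mult real_sqrt_power)
    finally show "norm (hom_part m n d fhat X l i j) \<le> sqrt ?S * sqrt n * sqrt ?q ^ l" by simp
  qed
qed

abbreviation "bd A B N N' \<equiv> four_block_mat A (0\<^sub>m N N') (0\<^sub>m N' N) B"

lemma diag_mult:
  assumes "A \<in> carrier_mat N N" "A' \<in> carrier_mat N N" "B \<in> carrier_mat N' N'" "B' \<in> carrier_mat N' N'"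
  shows "bd A B N N' * bd A' B' N N' = bd (A * A') (B * B') N N'"
  using assms by (subst mult_four_block_mat[OF assms(1) zero_carrier_mat zero_carrier_mat assms(3)
      assms(2) zero_carrier_mat zero_carrier_mat assms(4)]) auto

lemma diag_zero: "bd (0\<^sub>m N N) (0\<^sub>m N' N') N N' = (0\<^sub>m (N+N') (N+N') :: complex mat)"
  by (rule eq_matI) auto

lemma div_ge: "m*n \<le> (j::nat) \<Longrightarrow> m \<le> j div n" if "n > 0"
  using that by (metis div_le_mono nonzero_mult_div_cancel_right not_gr0)

lemma blockE_dsum:
  assumes n: "n > 0"
  shows "blockE (m+m') n a b = bd (blockE m n a b) (blockE m' n a b) (m*n) (m'*n)"
proof (rule eq_matI)
  fix i j assume i: "i < dim_row (bd (blockE m n a b) (blockE m' n a b) (m*n) (m'*n))"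
    and j: "j < dim_col (bd (blockE m n a b) (blockE m' n a b) (m*n) (m'*n))"
  then have i: "i < m*n + m'*n" and j: "j < m*n + m'*n" by (auto simp: blockE_def)
  have lhs: "blockE (m+m') n a b $$ (i,j) = (if i div n = j div n \<and> i mod n = a \<and> j mod n = b then 1 else 0)"
    using i j unfolding blockE_def by (simp add: algebra_simps)
  show "blockE (m+m') n a b $$ (i,j) = bd (blockE m n a b) (blockE m' n a b) (m*n) (m'*n) $$ (i,j)"
  proof (cases "i < m*n")
    case True
    then have idiv: "i div n < m" by (simp add: less_mult_imp_div_less)
    show ?thesis
    proof (cases "j < m*n")
      case True
      then show ?thesis using \<open>i < m*n\<close> lhs i j by (simp add: blockE_def)
    next
      case False
      then have "m \<le> j div n" using div_ge[OF n] by simp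
      then show ?thesis using \<open>i < m*n\<close> False lhs i j idiv by (simp add: blockE_def)
    qed
  next
    case False
    then obtain i' where i': "i = m*n + i'" by (metis le_add_diff_inverse not_less)
    have idiv: "i div n = m + i' div n" "i mod n = i' mod n" using n unfolding i' by (auto simp: mult.commute)
    show ?thesis
    proof (cases "j < m*n")
      case True
      then have jdiv: "j div n < m" by (simp add: less_mult_imp_div_less)
      then show ?thesis using False True lhs i j idiv by (simp add: blockE_def)
    next
      case False
      then obtain j' where j': "j = m*n + j'" by (metis le_add_diff_inverse not_less)
      have jdiv: "j div n = m + j' div n" "j mod n = j' mod n" using n unfolding j' by (auto simp: mult.commute)
      show ?thesis using False \<open>\<not> i < m*n\<close> lhs i j idiv jdiv unfolding i' j' by (simp add: blockE_def)
    qed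
  qed
qed (auto simp: blockE_def algebra_simps)

lemma tuple_dsum_length[simp]: "length (tuple_dsum N N' X X') = length X"
  unfolding tuple_dsum_def by simp

lemma tuple_dsum_nth[simp]: "k < length X \<Longrightarrow> tuple_dsum N N' X X' ! k = bd (X!k) (X'!k) N N'"
  unfolding tuple_dsum_def by simp

lemma word_eval_dsum:
  assumes n: "n > 0" and Xl: "length X = d" and X: "\<forall>k<d. X!k \<in> carrier_mat (m*n) (m*n)"
    and X'l: "length X' = d" and X': "\<forall>k<d. X'!k \<in> carrier_mat (m'*n) (m'*n)"
  shows "set w \<subseteq> {..<d} \<Longrightarrow> word_eval (m+m') n a b w (tuple_dsum (m*n) (m'*n) X X')
     = bd (word_eval m n a b w X) (word_eval m' n a b w X') (m*n) (m'*n)"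
proof (induction w arbitrary: a b)
  case Nil
  have z: "0\<^sub>m ((m+m')*n) ((m+m')*n) = bd (0\<^sub>m (m*n) (m*n)) (0\<^sub>m (m'*n) (m'*n)) (m*n) (m'*n)"
    unfolding diag_zero by (simp add: algebra_simps)
  show ?case
    by (cases a; cases b) (auto simp: blockE_dsum[OF n] z, (case_tac list; case_tac lista; simp add: blockE_dsum[OF n] z)+)
next
  case (Cons w ws)
  then have w: "w < d" "set ws \<subseteq> {..<d}" by auto
  have z: "0\<^sub>m ((m+m')*n) ((m+m')*n) = bd (0\<^sub>m (m*n) (m*n)) (0\<^sub>m (m'*n) (m'*n)) (m*n) (m'*n)"
    unfolding diag_zero by (simp add: algebra_simps)
  have Xw: "X!w \<in> carrier_mat (m*n) (m*n)" "X'!w \<in> carrier_mat (m'*n) (m'*n)" using X X' w by auto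
  show ?case
  proof (cases a)
    case Nil then show ?thesis by (cases b) (auto simp: z)
  next
    case (Cons a0 as)
    show ?thesis
    proof (cases b)
      case Nil then show ?thesis using Cons by (auto simp: z)
    next
      case (Cons b0 bs)
      have W: "word_eval m n as bs ws X \<in> carrier_mat (m*n) (m*n)"
        "word_eval m' n as bs ws X' \<in> carrier_mat (m'*n) (m'*n)"
        using word_eval_carrier[OF X w(2)] word_eval_carrier[OF X' w(2)] by auto
      have "word_eval (m+m') n a b (w#ws) (tuple_dsum (m*n) (m'*n) X X') =
        bd (blockE m n a0 b0) (blockE m' n a0 b0) (m*n) (m'*n) * bd (X!w) (X'!w) (m*n) (m'*n)
        * bd (word_eval m n as bs ws X) (word_eval m' n as bs ws X') (m*n) (m'*n)"
        using \<open>a = a0 # as\<close> Cons Cons.IH[OF w(2)] w Xl by (simp add: blockE_dsum[OF n])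
      also have "\<dots> = bd (blockE m n a0 b0 * X!w * word_eval m n as bs ws X)
           (blockE m' n a0 b0 * X'!w * word_eval m' n as bs ws X') (m*n) (m'*n)"
        using Xw W mult_carrier_mat[OF blockE_carrier Xw(1)] mult_carrier_mat[OF blockE_carrier Xw(2)]
        by (simp add: diag_mult)
      finally show ?thesis using \<open>a = a0 # as\<close> Cons by simp
    qed
  qed
qed

lemma sum_append_aux: "(\<Sum>i<N+(k::nat). g i) = (\<Sum>i<N. g i) + (\<Sum>r<k. g (N+r))"
  by (induct k) (auto simp: ac_simps)

lemma ns_append: assumes "a \<in> carrier_vec N" "b \<in> carrier_vec N'"
  shows "ns (N+N') (a @\<^sub>v b) = ns N a + ns N' b"
  unfolding ns_def sum_append_aux using assms by (auto intro!: sum.cong)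

lemma col_norm_dsum:
  assumes Xl: "length X = d" and X: "\<forall>k<d. X!k \<in> carrier_mat N N"
    and X'l: "length X' = d" and X': "\<forall>k<d. X'!k \<in> carrier_mat N' N'"
  shows "col_norm (N+N') (tuple_dsum N N' X X') \<le> max (col_norm N X) (col_norm N' X')"
proof -
  let ?Y = "tuple_dsum N N' X X'"
  let ?M = "max (col_norm N X) (col_norm N' X')"
  have Xc: "\<forall>k<length X. X ! k \<in> carrier_mat N N" using X Xl by simp
  have X'c: "\<forall>k<length X'. X' ! k \<in> carrier_mat N' N'" using X' X'l by simp
  have Yc: "\<forall>k<length ?Y. ?Y ! k \<in> carrier_mat (N+N') (N+N')" using X X' Xl by simp
  have M0: "?M \<ge> 0" using col_norm_nonneg[OF Xc] by simp
  show ?thesis unfolding col_norm_cset[of "N+N'"]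
  proof (rule cSup_least)
    show "cset (N+N') ?Y \<noteq> {}" using cset_zero[OF Yc] by auto
  next
    fix x assume "x \<in> cset (N+N') ?Y"
    then obtain v where x: "x = sqrt (\<Sum>k<length ?Y. ns (N+N') (?Y ! k *\<^sub>v v))"
      and v: "v \<in> carrier_vec (N+N')" and nv: "ns (N+N') v \<le> 1" unfolding cset_def ns_def by auto
    define v1 where "v1 = vec_first v N"
    define v2 where "v2 = vec_last v N'"
    have v12: "v = v1 @\<^sub>v v2" unfolding v1_def v2_def using v by simp
    have v1: "v1 \<in> carrier_vec N" and v2: "v2 \<in> carrier_vec N'" unfolding v1_def v2_def by auto
    have "(\<Sum>k<length ?Y. ns (N+N') (?Y ! k *\<^sub>v v))
       = (\<Sum>k<d. ns N (X!k *\<^sub>v v1) + ns N' (X'!k *\<^sub>v v2))"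
    proof (rule sum.cong)
      fix k assume k: "k \<in> {..<d}"
      have "?Y ! k *\<^sub>v v = X!k *\<^sub>v v1 @\<^sub>v X'!k *\<^sub>v v2"
        unfolding v12 using k Xl X X' v1 v2 by (simp add: mult_mat_vec_split)
      then show "ns (N+N') (?Y ! k *\<^sub>v v) = ns N (X!k *\<^sub>v v1) + ns N' (X'!k *\<^sub>v v2)"
      proof -
        have "X!k \<in> carrier_mat N N" "X'!k \<in> carrier_mat N' N'" using X X' k by auto
        from ns_append[OF mult_mat_vec_carrier[OF this(1) v1] mult_mat_vec_carrier[OF this(2) v2]]
        show ?thesis using \<open>?Y ! k *\<^sub>v v = _\<close> by simp
      qed
    qed (simp add: Xl)
    also have "\<dots> = (\<Sum>k<length X. ns N (X!k *\<^sub>v v1)) + (\<Sum>k<length X'. ns N' (X'!k *\<^sub>v v2))"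
      using Xl X'l by (simp add: sum.distrib)
    also have "\<dots> \<le> (col_norm N X)\<^sup>2 * ns N v1 + (col_norm N' X')\<^sup>2 * ns N' v2"
      by (intro add_mono col_norm_bound Xc X'c v1 v2)
    also have "\<dots> \<le> ?M\<^sup>2 * ns N v1 + ?M\<^sup>2 * ns N' v2"
      using col_norm_nonneg[OF Xc] col_norm_nonneg[OF X'c]
      by (intro add_mono mult_right_mono power_mono ns_nonneg) auto
    also have "\<dots> = ?M\<^sup>2 * ns (N+N') v"
      unfolding v12 ns_append[OF v1 v2] by (simp add: algebra_simps)
    also have "\<dots> \<le> ?M\<^sup>2" using nv by (simp add: mult_left_le)
    finally have "(\<Sum>k<length ?Y. ns (N+N') (?Y ! k *\<^sub>v v)) \<le> ?M\<^sup>2" .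
    then have "sqrt (\<Sum>k<length ?Y. ns (N+N') (?Y ! k *\<^sub>v v)) \<le> sqrt (?M\<^sup>2)"
      by (rule real_sqrt_le_mono)
    then show "x \<le> ?M" using M0 x by simp
  qed
qed

lemma hom_part_dsum:
  assumes n: "n > 0" and Xl: "length X = d" and X: "\<forall>k<d. X!k \<in> carrier_mat (m*n) (m*n)"
    and X'l: "length X' = d" and X': "\<forall>k<d. X'!k \<in> carrier_mat (m'*n) (m'*n)"
    and i: "i < m*n + m'*n" and j: "j < m*n + m'*n"
  shows "hom_part (m+m') n d fhat (tuple_dsum (m*n) (m'*n) X X') l i j =
    (if i < m*n then if j < m*n then hom_part m n d fhat X l i j else 0
     else if j < m*n then 0 else hom_part m' n d fhat X' l (i - m*n) (j - m*n))"
proof -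
  have e: "word_eval (m+m') n a b w (tuple_dsum (m*n) (m'*n) X X') $$ (i,j) =
    (if i < m*n then if j < m*n then word_eval m n a b w X $$ (i,j) else 0
     else if j < m*n then 0 else word_eval m' n a b w X' $$ (i - m*n, j - m*n))"
    if t: "(a,b,w) \<in> level_index n d l" for a b w
  proof -
    have ws: "set w \<subseteq> {..<d}" using t unfolding level_index_def fock_index_def by auto
    have W: "word_eval m n a b w X \<in> carrier_mat (m*n) (m*n)"
        "word_eval m' n a b w X' \<in> carrier_mat (m'*n) (m'*n)"
      using word_eval_carrier[OF X ws] word_eval_carrier[OF X' ws] by auto
    show ?thesis unfolding word_eval_dsum[OF n Xl X X'l X' ws] using W i j by simp
  qed
  show ?thesis
    unfolding hom_part_def
    by (cases "i < m*n"; cases "j < m*n"; simp; rule sum.neutral[OF ballI] sum.cong[OF refl])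
       (auto simp: e)
qed

lemma ev_dsum:
  assumes n: "n > 0" and Xl: "length X = d" and X: "\<forall>k<d. X!k \<in> carrier_mat (m*n) (m*n)"
    and X'l: "length X' = d" and X': "\<forall>k<d. X'!k \<in> carrier_mat (m'*n) (m'*n)"
  shows "ev (m+m') n d fhat (tuple_dsum (m*n) (m'*n) X X') =
    four_block_mat (ev m n d fhat X) (0\<^sub>m (m * n) (m' * n)) (0\<^sub>m (m' * n) (m * n)) (ev m' n d fhat X')"
proof (rule eq_matI)
  fix i j assume i: "i < dim_row (four_block_mat (ev m n d fhat X) (0\<^sub>m (m * n) (m' * n)) (0\<^sub>m (m' * n) (m * n)) (ev m' n d fhat X'))"
    and j: "j < dim_col (four_block_mat (ev m n d fhat X) (0\<^sub>m (m * n) (m' * n)) (0\<^sub>m (m' * n) (m * n)) (ev m' n d fhat X'))"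
  then have i: "i < m*n + m'*n" and j: "j < m*n + m'*n" by (auto simp: ev_def)
  have i2: "i < (m+m')*n" and j2: "j < (m+m')*n" using i j by (auto simp: algebra_simps)
  show "ev (m+m') n d fhat (tuple_dsum (m*n) (m'*n) X X') $$ (i,j) =
    four_block_mat (ev m n d fhat X) (0\<^sub>m (m * n) (m' * n)) (0\<^sub>m (m' * n) (m * n)) (ev m' n d fhat X') $$ (i,j)"
  proof -
    have L: "ev (m+m') n d fhat (tuple_dsum (m*n) (m'*n) X X') $$ (i,j) =
      (\<Sum>l. hom_part (m+m') n d fhat (tuple_dsum (m*n) (m'*n) X X') l i j)"
      unfolding ev_def using i2 j2 by simp
    have e1: "ev m n d fhat X $$ (i,j) = (\<Sum>l. hom_part m n d fhat X l i j)" if "i < m*n" "j < m*n"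
      unfolding ev_def using that by simp
    have e2: "ev m' n d fhat X' $$ (i - m*n, j - m*n) = (\<Sum>l. hom_part m' n d fhat X' l (i - m*n) (j - m*n))"
      if "\<not> i < m*n" "\<not> j < m*n"
      unfolding ev_def using that i j by simp
    have dims: "dim_row (ev m n d fhat X) = m*n" "dim_col (ev m n d fhat X) = m*n"
       "dim_row (ev m' n d fhat X') = m'*n" "dim_col (ev m' n d fhat X') = m'*n" unfolding ev_def by auto
    show ?thesis
      unfolding L hom_part_dsum[OF n Xl X X'l X' i j]
      using i j dims e1 e2 by (cases "i < m*n"; cases "j < m*n") (simp_all only: index_mat_four_block if_True if_False, auto)
  qed
qed (auto simp: ev_def algebra_simps)

theorem mainTheorem9:
  fixes n d :: nat and fhat :: "nat list \<Rightarrow> nat list \<Rightarrow> nat list \<Rightarrow> complex"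
  assumes "n \<ge> 1" and "d \<ge> 1" and "in_fock n d fhat"
  shows "(\<forall>m\<ge>1. \<forall>X\<in>dom_level m n d.
            (\<forall>i<m * n. \<forall>j<m * n. summable (\<lambda>l. hom_part m n d fhat X l i j))
            \<and> ev m n d fhat X \<in> carrier_mat (m * n) (m * n))
       \<and> (\<forall>m\<ge>1. \<forall>m'\<ge>1. \<forall>X\<in>dom_level m n d. \<forall>X'\<in>dom_level m' n d.
            tuple_dsum (m * n) (m' * n) X X' \<in> dom_level (m + m') n d
            \<and> ev (m + m') n d fhat (tuple_dsum (m * n) (m' * n) X X')
                = four_block_mat (ev m n d fhat X) (0\<^sub>m (m * n) (m' * n))
                                 (0\<^sub>m (m' * n) (m * n)) (ev m' n d fhat X'))"
proof -
  have n: "n > 0" using assms(1) by simp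
  have P1: "(\<forall>i<m * n. \<forall>j<m * n. summable (\<lambda>l. hom_part m n d fhat X l i j))
            \<and> ev m n d fhat X \<in> carrier_mat (m * n) (m * n)" if XD: "X \<in> dom_level m n d" for m X
  proof -
    from XD have Xl: "length X = d" and X: "\<forall>k<d. X!k \<in> carrier_mat (m*n) (m*n)"
      and c: "col_norm (m*n) X < 1 / sqrt (real n)" unfolding dom_level_def by auto
    have "\<forall>i<m * n. \<forall>j<m * n. summable (\<lambda>l. hom_part m n d fhat X l i j)"
      using hom_summable[OF assms(3) Xl X _ _ c] by blast
    moreover have "ev m n d fhat X \<in> carrier_mat (m * n) (m * n)" unfolding ev_def by simp
    ultimately show ?thesis by blast
  qed
  have P2: "tuple_dsum (m * n) (m' * n) X X' \<in> dom_level (m + m') n d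
            \<and> ev (m + m') n d fhat (tuple_dsum (m * n) (m' * n) X X')
                = four_block_mat (ev m n d fhat X) (0\<^sub>m (m * n) (m' * n))
                                 (0\<^sub>m (m' * n) (m * n)) (ev m' n d fhat X')"
    if XD: "X \<in> dom_level m n d" and X'D: "X' \<in> dom_level m' n d" for m m' X X'
  proof -
    from XD have Xl: "length X = d" and X: "\<forall>k<d. X!k \<in> carrier_mat (m*n) (m*n)"
      and c: "col_norm (m*n) X < 1 / sqrt (real n)" unfolding dom_level_def by auto
    from X'D have X'l: "length X' = d" and X': "\<forall>k<d. X'!k \<in> carrier_mat (m'*n) (m'*n)"
      and c': "col_norm (m'*n) X' < 1 / sqrt (real n)" unfolding dom_level_def by auto
    have "col_norm ((m+m')*n) (tuple_dsum (m * n) (m' * n) X X') \<le> max (col_norm (m*n) X) (col_norm (m'*n) X')"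
      using col_norm_dsum[OF Xl X X'l X'] by (simp add: algebra_simps)
    also have "\<dots> < 1 / sqrt (real n)" using c c' by simp
    finally have cc: "col_norm ((m+m')*n) (tuple_dsum (m * n) (m' * n) X X') < 1 / sqrt (real n)" .
    have car: "\<forall>k<d. tuple_dsum (m * n) (m' * n) X X' ! k \<in> carrier_mat ((m+m')*n) ((m+m')*n)"
    proof (intro allI impI)
      fix k assume k: "k < d"
      have "tuple_dsum (m * n) (m' * n) X X' ! k \<in> carrier_mat (m*n + m'*n) (m*n + m'*n)"
        using k Xl X X' by simp
      then show "tuple_dsum (m * n) (m' * n) X X' ! k \<in> carrier_mat ((m+m')*n) ((m+m')*n)"
        by (simp add: algebra_simps)
    qed
    have "tuple_dsum (m * n) (m' * n) X X' \<in> dom_level (m + m') n d"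
      unfolding dom_level_def using Xl car cc by simp
    moreover have "ev (m + m') n d fhat (tuple_dsum (m * n) (m' * n) X X')
                = four_block_mat (ev m n d fhat X) (0\<^sub>m (m * n) (m' * n))
                                 (0\<^sub>m (m' * n) (m * n)) (ev m' n d fhat X')"
      by (rule ev_dsum[OF n Xl X X'l X'])
    ultimately show ?thesis by blast
  qed
  show ?thesis
    apply (rule conjI)
     apply (intro allI impI ballI)
     apply (rule P1, assumption)
    apply (intro allI impI ballI)
    apply (rule P2, assumption+)
    done
qed

end
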